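(* Let $N\in\mathbb N$ and $\alpha_i,p_i\geq1$, $\beta_i>0$ for $i=1,\dots,N$. There is a constant $C=C(\alpha_i,\beta_i,p_i,N)>0$ such that for all real $\tau<\delta$ with $0<\delta-\tau\leq1$ and all $f_i\in L^\infty([\tau,\delta])$, $$\inf_{\ell}\Big\{\sum_{i=1}^N\Big(\int_\tau^\delta|\ell'(s)|^{\alpha_i}|f_i(s)|^{p_i}\,ds\Big)^{1/p_i}\Big\}\leq C(\delta-\tau)^{-\max_i\frac{\alpha_i-1}{p_i}-\frac{1}{\min_i\beta_i}}\sum_{i=1}^N\Big(\int_\tau^\delta|f_i(s)|^{\beta_i}\,ds\Big)^{1/\beta_i},$$ where the infimum is over all $\ell\in C^1([\tau,\delta])$ with $\ell'\leq0$, $\ell(\tau)=1$, $\ell(\delta)=0$. *)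

theory Defs
  imports "HOL-Analysis.Analysis"
begin

definition Linfty_on :: "real \<Rightarrow> real \<Rightarrow> (real \<Rightarrow> real) \<Rightarrow> bool" where
  "Linfty_on a b f \<longleftrightarrow>
     set_borel_measurable lebesgue {a..b} f \<and>
     (\<exists>B. AE s in lebesgue. s \<in> {a..b} \<longrightarrow> \<bar>f s\<bar> \<le> B)"

definition admissible_cutoff ::
  "real \<Rightarrow> real \<Rightarrow> (real \<Rightarrow> real) \<Rightarrow> (real \<Rightarrow> real) \<Rightarrow> bool" where
  "admissible_cutoff a b l l' \<longleftrightarrow>
     (\<forall>s\<in>{a..b}. (l has_real_derivative l' s) (at s within {a..b})) \<and>
     continuous_on {a..b} l' \<and>
     (\<forall>s\<in>{a..b}. l' s \<le> 0) \<and> l a = 1 \<and> l b = 0"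

end

theory Submission
  imports Defs
begin


lemma approx_indicator:
  fixes S :: "real set"
  assumes S: "S \<in> sets lebesgue" and e: "e > 0"
  obtains g :: "real \<Rightarrow> real" and D :: "real set" where "continuous_on UNIV g" "\<And>x. 0 \<le> g x" "\<And>x. g x \<le> 1"
    "D \<in> lmeasurable" "measure lebesgue D < e" "\<And>x. x \<notin> D \<Longrightarrow> g x = indicator S x"
proof -
  have e2: "e/2 > 0" using e by simp
  obtain T where T: "closed T" "T \<subseteq> S" "S-T \<in> lmeasurable" and ST: "emeasure lebesgue (S - T) < ennreal (e/2)"
    by (meson e2 S sets_lebesgue_inner_closed)
  obtain U where U: "open U" "S \<subseteq> U" "(U - S) \<in> lmeasurable" and US: "emeasure lebesgue (U - S) < ennreal (e/2)"
    by (meson e2 S sets_lebesgue_outer_open)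
  have 1: "continuous_on (T \<union> -U) (indicat_real S)"
    unfolding indicator_def of_bool_def
  proof (rule continuous_on_cases [OF \<open>closed T\<close>])
    show "closed (- U)"
      using \<open>open U\<close> by blast
    show "continuous_on T (\<lambda>x. 1::real)" "continuous_on (- U) (\<lambda>x. 0::real)"
      by (auto simp: continuous_on)
    show "\<forall>x. x \<in> T \<and> x \<notin> S \<or> x \<in> - U \<and> x \<in> S \<longrightarrow> (1::real) = 0"
      using \<open>T \<subseteq> S\<close> \<open>S \<subseteq> U\<close> by auto
  qed
  have 2: "closedin (top_of_set UNIV) (T \<union> -U)"
    using \<open>closed T\<close> \<open>open U\<close> by auto
  obtain g where g: "continuous_on UNIV g" "\<And>x. x \<in> T \<union> -U \<Longrightarrow> g x = indicat_real S x"
      "\<And>x. x \<in> UNIV \<Longrightarrow> g x \<in> cbox 0 1"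
    by (rule Tietze_closed_interval_1 [OF 1 2, of 0 1]) (auto simp: indicator_def)
  let ?D = "(S-T) \<union> (U-S)"
  have Dm: "?D \<in> lmeasurable" using T U by auto
  have "measure lebesgue (S-T) < e/2"
    using ST T(3) by (simp add: emeasure_eq_measure2 ennreal_less_iff)
  moreover have "measure lebesgue (U-S) < e/2"
    using US U(3) by (simp add: emeasure_eq_measure2 ennreal_less_iff)
  moreover have "measure lebesgue ?D \<le> measure lebesgue (S-T) + measure lebesgue (U-S)"
    using T(3) U(3) by (intro measure_Un_le) auto
  ultimately have "measure lebesgue ?D < e" by linarith
  moreover have "\<And>x. x \<notin> ?D \<Longrightarrow> g x = indicator S x"
    using g(2) T(2) U(2) by auto
  ultimately show ?thesis using that[of g ?D] g(1,3) Dm by auto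
qed

lemma LINT_eq_M: "(LINT s:{a..b}|lebesgue. F s) = integral\<^sup>L (lebesgue_on {a..b}) (F :: real \<Rightarrow> real)"
  unfolding set_lebesgue_integral_def by (subst integral_restrict_space) auto

lemma cont_meas_M: "continuous_on UNIV (g::real\<Rightarrow>real) \<Longrightarrow> g \<in> borel_measurable (lebesgue_on S)"
  apply (rule measurable_restrict_space1)
  apply (rule measurable_completion)
  using borel_measurable_continuous_onI by (simp add: measurable_lborel1)

lemma finM: "finite_measure (lebesgue_on {a..b::real})"
  by (rule finite_measure_lebesgue_on) auto

lemma measM: "A \<subseteq> {a..b} \<Longrightarrow> measure (lebesgue_on {a..b::real}) A = measure lebesgue A"
  by (rule measure_restrict_space) auto

lemma step:
  fixes N :: nat and \<alpha> p Q :: "nat \<Rightarrow> real" and f :: "nat \<Rightarrow> real \<Rightarrow> real"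
    and a b h B \<epsilon> :: real and E :: "real set"
  assumes \<alpha>: "\<And>i. i<N \<Longrightarrow> \<alpha> i \<ge> 1" and p: "\<And>i. i<N \<Longrightarrow> p i \<ge> 1"
   and ab: "a < b" and h: "h = b - a"
   and fm: "\<And>i. i<N \<Longrightarrow> f i \<in> borel_measurable (lebesgue_on {a..b})"
   and fB: "\<And>i. i<N \<Longrightarrow> AE x in lebesgue_on {a..b}. \<bar>f i x\<bar> \<le> B"
   and B: "B \<ge> 0"
   and Em: "E \<in> sets lebesgue" and Esub: "E \<subseteq> {a..b}" and Emeas: "h/2 \<le> measure lebesgue E"
   and EQ: "\<And>x i. x \<in> E \<Longrightarrow> i < N \<Longrightarrow> \<bar>f i x\<bar> powr p i \<le> Q i"
   and Q: "\<And>i. i<N \<Longrightarrow> Q i \<ge> 0"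
   and \<epsilon>: "0 < \<epsilon>" "\<epsilon> < h/2"
  shows "\<exists>l l'. admissible_cutoff a b l l' \<and>
     (\<Sum>i<N. (LINT s:{a..b}|lebesgue. \<bar>l' s\<bar> powr \<alpha> i * \<bar>f i s\<bar> powr p i) powr (1 / p i))
     \<le> (\<Sum>i<N. ((h/2-\<epsilon>) powr (-\<alpha> i) * (Q i * h + B powr p i * \<epsilon>)) powr (1/p i))"
proof -
  obtain g :: "real \<Rightarrow> real" and D :: "real set" where gc: "continuous_on UNIV g" and g0: "\<And>x. 0 \<le> g x" and g1: "\<And>x. g x \<le> 1"
    and Dm: "D \<in> lmeasurable" and Dmeas: "measure lebesgue D < \<epsilon>"
    and gD: "\<And>x. x \<notin> D \<Longrightarrow> g x = indicator E x"
    using approx_indicator[OF Em \<epsilon>(1)] by blast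
  define M where "M = lebesgue_on {a..b}"
  interpret finite_measure M unfolding M_def by (rule finM)
  have gm: "g \<in> borel_measurable M" unfolding M_def using gc by (rule cont_meas_M)
  have gint: "integrable M g"
    by (rule integrable_const_bound[of _ 1]) (use g0 g1 gm in auto)
  define G where "G = integral {a..b} g"
  have gcab: "continuous_on {a..b} g" using gc continuous_on_subset by blast
  have G_M: "G = integral\<^sup>L M g"
  proof -
    have "g absolutely_integrable_on {a..b}"
      using gcab by (rule absolutely_integrable_continuous_real)
    then have "(LINT x:{a..b}|lebesgue. g x) = integral {a..b} g"
      by (rule set_lebesgue_integral_eq_integral)
    then show ?thesis unfolding G_def M_def by (simp add: LINT_eq_M)
  qed
  define D' where "D' = D \<inter> {a..b}"
  have D'sets: "D' \<in> sets M" unfolding M_def D'_def using Dm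
    by (subst sets_restrict_space_iff) auto
  have Esets: "E \<in> sets M" unfolding M_def using Em Esub
    by (subst sets_restrict_space_iff) auto
  have spM: "space M = {a..b}" unfolding M_def by simp
  have mE: "measure M E = measure lebesgue E" unfolding M_def using Esub by (rule measM)
  have mD': "measure M D' = measure lebesgue D'" unfolding M_def D'_def by (rule measM) auto
  have "measure lebesgue D' \<le> measure lebesgue D"
    unfolding D'_def using Dm by (intro measure_mono_fmeasurable) auto
  have mEh: "measure lebesgue E \<le> h"
  proof -
    have "measure lebesgue E \<le> measure lebesgue {a..b}"
      using Esub Em by (intro measure_mono_fmeasurable) auto
    then show ?thesis using h ab by simp
  qed
  have "integral\<^sup>L M (\<lambda>x. indicator E x - indicator D' x) \<le> integral\<^sup>L M g"
  proof (rule integral_mono)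
    show "integrable M (\<lambda>x. indicator E x - indicator D' x :: real)"
      using Esets D'sets by (intro Bochner_Integration.integrable_diff integrable_real_indicator) (auto simp: emeasure_real less_top[symmetric])
    show "integrable M g" by (rule gint)
    fix x assume "x \<in> space M"
    then show "indicator E x - indicator D' x \<le> g x"
      using gD[of x] g0[of x] g1[of x] by (cases "x \<in> D") (auto simp: D'_def spM indicator_def)
  qed
  also have "integral\<^sup>L M (\<lambda>x. indicator E x - indicator D' x) = measure M E - measure M D'"
    using Esets D'sets sets.sets_into_space[OF Esets] sets.sets_into_space[OF D'sets]
    by (subst Bochner_Integration.integral_diff) (auto intro!: integrable_real_indicator simp: emeasure_real less_top[symmetric] Int_absorb2)
  finally have Gge: "G \<ge> h/2 - \<epsilon>"
    using G_M mE mD' Emeas \<open>measure lebesgue D' \<le> measure lebesgue D\<close> Dmeas by linarith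
  have Gpos: "G > 0" using Gge \<epsilon> by linarith
  define l' where "l' = (\<lambda>s. - g s / G)"
  define l where "l = (\<lambda>s. 1 - integral {a..s} g / G)"
  have adm: "admissible_cutoff a b l l'"
    unfolding admissible_cutoff_def
  proof (intro conjI ballI)
    fix s assume s: "s \<in> {a..b}"
    have d: "((\<lambda>u. integral {a..u} g) has_real_derivative g s) (at s within {a..b})"
      using integral_has_vector_derivative[OF gcab s]
      by (simp add: has_real_derivative_iff_has_vector_derivative)
    have "((\<lambda>u. 1 - integral {a..u} g / G) has_real_derivative (0 - g s / G)) (at s within {a..b})"
      by (intro DERIV_diff DERIV_cdivide d DERIV_const)
    then show "(l has_real_derivative l' s) (at s within {a..b})"
      by (simp add: l_def l'_def)
    show "l' s \<le> 0" using g0[of s] Gpos by (simp add: l'_def)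
  next
    show "continuous_on {a..b} l'" unfolding l'_def
      using Gpos by (intro continuous_intros gcab) auto
    show "l a = 1" by (simp add: l_def)
    show "l b = 0" using Gpos by (simp add: l_def G_def[symmetric])
  qed
  have fmM[measurable]: "f i \<in> borel_measurable M" if "i < N" for i
    using fm[OF that] by (simp add: M_def)
  note gm[measurable]
  have bnd: "(LINT s:{a..b}|lebesgue. \<bar>l' s\<bar> powr \<alpha> i * \<bar>f i s\<bar> powr p i) powr (1/p i)
      \<le> ((h/2-\<epsilon>) powr (-\<alpha> i) * (Q i * h + B powr p i * \<epsilon>)) powr (1/p i)" if i: "i < N" for i
  proof -
    let ?F = "\<lambda>s. g s powr \<alpha> i * \<bar>f i s\<bar> powr p i"
    let ?I = "LINT s:{a..b}|lebesgue. \<bar>l' s\<bar> powr \<alpha> i * \<bar>f i s\<bar> powr p i"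
    have "(\<lambda>s. \<bar>l' s\<bar> powr \<alpha> i * \<bar>f i s\<bar> powr p i) = (\<lambda>s. ?F s / G powr \<alpha> i)"
      using Gpos g0 by (auto simp: l'_def powr_divide)
    then have "?I = integral\<^sup>L M ?F / G powr \<alpha> i"
      by (simp add: LINT_eq_M M_def)
    then have eqI: "?I = G powr (-\<alpha> i) * integral\<^sup>L M ?F"
      by (simp add: powr_minus_divide)
    have Fm: "?F \<in> borel_measurable M" using gm fmM[OF i] by (intro borel_measurable_times powr_real_measurable measurable_abs_powr) auto
    have gpow: "g x powr \<alpha> i \<le> 1" for x
      using powr_mono2[of "\<alpha> i" "g x" 1] g0[of x] g1[of x] \<alpha>[OF i] by simp
    have Fint: "integrable M ?F"
    proof (rule integrable_const_bound[of _ "B powr p i"])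
      show "?F \<in> borel_measurable M" by (rule Fm)
      show "AE x in M. norm (?F x) \<le> B powr p i"
        using fB[OF i] unfolding M_def[symmetric]
      proof eventually_elim
        case (elim x)
        have "\<bar>f i x\<bar> powr p i \<le> B powr p i" using elim p[OF i] by (intro powr_mono2) auto
        moreover have "0 \<le> g x powr \<alpha> i" by simp
        ultimately have "g x powr \<alpha> i * \<bar>f i x\<bar> powr p i \<le> 1 * B powr p i"
          using gpow[of x] by (intro mult_mono) auto
        then show ?case by simp
      qed
    qed
    let ?R = "\<lambda>x. indicator E x * Q i + indicator D' x * B powr p i"
    have Rint: "integrable M ?R"
      using Esets D'sets by (auto intro!: integrable_real_indicator simp: emeasure_real less_top[symmetric])
    have "integral\<^sup>L M ?F \<le> integral\<^sup>L M ?R"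
    proof (rule integral_mono_AE[OF Fint Rint])
      show "AE x in M. ?F x \<le> ?R x"
        using fB[OF i] AE_space unfolding M_def[symmetric]
      proof eventually_elim
        case (elim x)
        then have xab: "x \<in> {a..b}" by (simp add: spM)
        show ?case
        proof (cases "x \<in> D")
          case True
          then have "x \<in> D'" using xab by (simp add: D'_def)
          have "\<bar>f i x\<bar> powr p i \<le> B powr p i" using elim p[OF i] by (intro powr_mono2) auto
          then have "?F x \<le> 1 * B powr p i" using gpow[of x]
            by (intro mult_mono) auto
          moreover have "0 \<le> indicator E x * Q i" using Q[OF i] by simp
          ultimately show ?thesis using \<open>x \<in> D'\<close> by simp
        next
          case False
          then have gx: "g x = indicator E x" by (rule gD)
          have "0 \<le> indicator D' x * B powr p i" by simp
          moreover have "?F x \<le> indicator E x * Q i"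
            using gx EQ[of x i] i \<alpha>[OF i] by (cases "x \<in> E") auto
          ultimately show ?thesis by linarith
        qed
      qed
    qed
    also have "integral\<^sup>L M ?R = Q i * measure M E + B powr p i * measure M D'"
      using Esets D'sets sets.sets_into_space[OF Esets] sets.sets_into_space[OF D'sets]
      by (subst Bochner_Integration.integral_add)
        (auto intro!: integrable_real_indicator simp: emeasure_real less_top[symmetric] Int_absorb2)
    also have "\<dots> \<le> Q i * h + B powr p i * \<epsilon>"
    proof (intro add_mono mult_left_mono)
      show "measure M E \<le> h" using mE mEh by simp
      show "measure M D' \<le> \<epsilon>" using mD' \<open>measure lebesgue D' \<le> measure lebesgue D\<close> Dmeas by simp
    qed (use Q[OF i] in auto)
    finally have intb: "integral\<^sup>L M ?F \<le> Q i * h + B powr p i * \<epsilon>" .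
    have Fnn: "0 \<le> integral\<^sup>L M ?F" by (intro Bochner_Integration.integral_nonneg) simp
    have "?I \<le> G powr (-\<alpha> i) * (Q i * h + B powr p i * \<epsilon>)"
      unfolding eqI by (intro mult_left_mono intb) simp
    also have "\<dots> \<le> (h/2-\<epsilon>) powr (-\<alpha> i) * (Q i * h + B powr p i * \<epsilon>)"
      using Fnn intb \<alpha>[OF i] \<epsilon> Gge Q[OF i] ab h by (intro mult_right_mono powr_mono2') auto
    finally have "?I \<le> (h/2-\<epsilon>) powr (-\<alpha> i) * (Q i * h + B powr p i * \<epsilon>)" .
    moreover have "0 \<le> ?I" unfolding eqI using Fnn by simp
    ultimately show ?thesis using p[OF i] by (intro powr_mono2) auto
  qed
  show ?thesis
    by (rule exI[of _ l], rule exI[of _ l'], intro conjI adm sum_mono bnd) simp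
qed



lemma alg:
  fixes h n \<alpha> p \<beta> :: real and N :: nat
  assumes h: "h > 0" and n: "n \<ge> 0" and p: "p > 0" and \<beta>: "\<beta> > 0" and N: "N > 0"
  shows "((h/2) powr (-\<alpha>) * ((2*N*n/h) powr (p/\<beta>) * h)) powr (1/p)
       = 2 powr (\<alpha>/p) * (2*N) powr (1/\<beta>) * h powr (-(\<alpha>-1)/p - 1/\<beta>) * n powr (1/\<beta>)"
proof -
  have "((h/2) powr (-\<alpha>) * ((2*N*n/h) powr (p/\<beta>) * h)) powr (1/p)
      = ((h/2) powr (-\<alpha>)) powr (1/p) * ((2*N*n/h) powr (p/\<beta>)) powr (1/p) * h powr (1/p)"
    using h n by (simp add: powr_mult mult.assoc)
  also have "\<dots> = (h/2) powr (-\<alpha>/p) * (2*N*n/h) powr (1/\<beta>) * h powr (1/p)"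
    using p by (simp add: powr_powr)
  also have "(h/2) powr (-\<alpha>/p) = h powr (-\<alpha>/p) * 2 powr (\<alpha>/p)"
  proof -
    have e1: "(h/2) powr (-\<alpha>/p) = h powr (-\<alpha>/p) / 2 powr (-\<alpha>/p)"
      by (rule powr_divide)
    have e2: "2 powr (-\<alpha>/p) = inverse (2 powr (\<alpha>/p))"
      by (metis minus_divide_left powr_minus)
    show ?thesis unfolding e1 e2 by (simp add: divide_inverse)
  qed
  also have "(2*N*n/h) powr (1/\<beta>) = (2*N) powr (1/\<beta>) * n powr (1/\<beta>) / h powr (1/\<beta>)"
    using h n by (simp add: powr_divide powr_mult)
  also have "h powr (-\<alpha>/p) * 2 powr (\<alpha>/p) * ((2*N) powr (1/\<beta>) * n powr (1/\<beta>) / h powr (1/\<beta>)) * h powr (1/p)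
     = 2 powr (\<alpha>/p) * (2*N) powr (1/\<beta>) * (h powr (-\<alpha>/p) * h powr (1/p) / h powr (1/\<beta>)) * n powr (1/\<beta>)"
    by (simp add: field_simps)
  also have "h powr (-\<alpha>/p) * h powr (1/p) / h powr (1/\<beta>) = h powr (-(\<alpha>-1)/p - 1/\<beta>)"
    using h by (simp add: powr_add[symmetric] powr_diff[symmetric] diff_divide_distrib add_divide_distrib)
  finally show ?thesis .
qed



lemma core:
  fixes N :: nat and \<alpha> \<beta> p :: "nat \<Rightarrow> real" and f :: "nat \<Rightarrow> real \<Rightarrow> real" and a b h :: real
  assumes N: "N > 0"
      and \<alpha>: "\<And>i. i < N \<Longrightarrow> \<alpha> i \<ge> 1"
      and p: "\<And>i. i < N \<Longrightarrow> p i \<ge> 1"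
      and \<beta>: "\<And>i. i < N \<Longrightarrow> \<beta> i > 0"
      and ab: "a < b" and h: "h = b - a"
      and fL: "\<And>i. i < N \<Longrightarrow> Linfty_on a b (f i)"
  shows "Inf {(\<Sum>i<N. (LINT s:{a..b}|lebesgue. \<bar>l' s\<bar> powr \<alpha> i * \<bar>f i s\<bar> powr p i)
                      powr (1 / p i)) | l l'. admissible_cutoff a b l l'}
    \<le> (\<Sum>i<N. 2 powr (\<alpha> i / p i) * (2*N) powr (1/\<beta> i) * h powr (-(\<alpha> i-1)/p i - 1/\<beta> i)
             * (LINT s:{a..b}|lebesgue. \<bar>f i s\<bar> powr \<beta> i) powr (1/\<beta> i))"
proof -
  define M where "M = lebesgue_on {a..b}"
  interpret finite_measure M unfolding M_def by (rule finM)
  have spM: "space M = {a..b}" unfolding M_def by simp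
  have hpos: "h > 0" using ab h by simp
  have fm: "f i \<in> borel_measurable M" if i: "i < N" for i
    using fL[OF i] unfolding Linfty_on_def set_borel_measurable_def M_def
    by (subst borel_measurable_restrict_space_iff) auto
  have exB: "\<exists>B. AE x in M. \<bar>f i x\<bar> \<le> B" if i: "i < N" for i
  proof -
    obtain B where "AE s in lebesgue. s \<in> {a..b} \<longrightarrow> \<bar>f i s\<bar> \<le> B"
      using fL[OF i] unfolding Linfty_on_def by blast
    then have "AE x in M. \<bar>f i x\<bar> \<le> B" unfolding M_def
      by (subst AE_restrict_space_iff) auto
    then show ?thesis by blast
  qed
  define Bf where "Bf i = (SOME B. AE x in M. \<bar>f i x\<bar> \<le> B)" for i
  define B where "B = (\<Sum>i<N. \<bar>Bf i\<bar>)"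
  have B0: "B \<ge> 0" unfolding B_def by (simp add: sum_nonneg)
  have fB: "AE x in M. \<bar>f i x\<bar> \<le> B" if i: "i < N" for i
  proof -
    have AEf: "AE x in M. \<bar>f i x\<bar> \<le> Bf i"
      unfolding Bf_def using someI_ex[OF exB[OF i]] .
    have Bf_le: "Bf i \<le> B" unfolding B_def
      using i member_le_sum[of i "{..<N}" "\<lambda>i. \<bar>Bf i\<bar>"] by auto
    show ?thesis by (rule eventually_mono[OF AEf]) (use Bf_le in auto)
  qed
  define n where "n i = (LINT s:{a..b}|lebesgue. \<bar>f i s\<bar> powr \<beta> i)" for i
  have nM: "n i = integral\<^sup>L M (\<lambda>s. \<bar>f i s\<bar> powr \<beta> i)" for i
    unfolding n_def M_def by (rule LINT_eq_M)
  have um: "(\<lambda>s. \<bar>f i s\<bar> powr \<beta> i) \<in> borel_measurable M" if i: "i < N" for i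
    using fm[OF i] by (intro measurable_abs_powr) auto
  have uint: "integrable M (\<lambda>s. \<bar>f i s\<bar> powr \<beta> i)" if i: "i < N" for i
  proof (rule integrable_const_bound[of _ "B powr \<beta> i"])
    show "AE x in M. norm (\<bar>f i x\<bar> powr \<beta> i) \<le> B powr \<beta> i"
      using fB[OF i] by eventually_elim (use \<beta>[OF i] in \<open>auto intro!: powr_mono2\<close>)
  qed (rule um[OF i])
  have n0: "n i \<ge> 0" for i
    unfolding nM by (intro Bochner_Integration.integral_nonneg) simp
  define c where "c i = 2 * real N * n i / h" for i
  define E where "E = {x\<in>space M. \<forall>i<N. \<bar>f i x\<bar> powr \<beta> i \<le> c i}"
  define A where "A i = {x\<in>space M. c i < \<bar>f i x\<bar> powr \<beta> i}" for i
  have Ai: "A i \<in> sets M" if i: "i < N" for i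
  proof -
    have [measurable]: "(\<lambda>s. \<bar>f i s\<bar> powr \<beta> i) \<in> borel_measurable M" by (rule um[OF i])
    show ?thesis unfolding A_def by measurable
  qed
  have compl: "space M - E = (\<Union>i\<in>{..<N}. A i)"
    unfolding E_def A_def by auto
  have Esets: "E \<in> sets M"
  proof -
    have "E = space M - (\<Union>i\<in>{..<N}. A i)" using compl unfolding E_def by auto
    then show ?thesis using Ai by auto
  qed
  have mA: "measure M (A i) \<le> h / (2 * N)" if i: "i < N" for i
  proof (cases "n i = 0")
    case True
    then have "AE x in M. \<bar>f i x\<bar> powr \<beta> i = 0"
      using integral_nonneg_eq_0_iff_AE[OF uint[OF i]] nM by simp
    then have "emeasure M (A i) = 0"
      using AE_iff_measurable[OF Ai[OF i], of "\<lambda>x. \<bar>f i x\<bar> powr \<beta> i = 0"]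
      unfolding A_def c_def using True by auto
    then have "measure M (A i) = 0" by (simp add: measure_def)
    then show ?thesis using hpos N by simp
  next
    case False
    then have cpos: "c i > 0" using n0[of i] hpos N unfolding c_def by simp
    have "measure M (A i) \<le> measure M {x\<in>space M. c i \<le> \<bar>f i x\<bar> powr \<beta> i}"
    proof (rule finite_measure_mono)
      show "A i \<subseteq> {x\<in>space M. c i \<le> \<bar>f i x\<bar> powr \<beta> i}" unfolding A_def by auto
      have [measurable]: "(\<lambda>s. \<bar>f i s\<bar> powr \<beta> i) \<in> borel_measurable M" by (rule um[OF i])
      show "{x\<in>space M. c i \<le> \<bar>f i x\<bar> powr \<beta> i} \<in> sets M" by measurable
    qed
    also have "\<dots> \<le> (\<integral>x. \<bar>f i x\<bar> powr \<beta> i \<partial>M) / c i"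
      by (rule integral_Markov_inequality_measure[OF uint[OF i] sets.top _ cpos]) simp
    also have "\<dots> = h / (2 * N)"
      using False hpos N unfolding nM[symmetric] c_def by (simp add: field_simps)
    finally show ?thesis .
  qed
  have "measure M (space M - E) \<le> (\<Sum>i<N. measure M (A i))"
    unfolding compl by (rule measure_UNION_le) (use Ai in auto)
  also have "\<dots> \<le> (\<Sum>i<N. h / (2 * N))" by (rule sum_mono) (use mA in auto)
  also have "\<dots> = h / 2" using N by simp
  finally have mc: "measure M (space M - E) \<le> h / 2" .
  have "measure M (space M - E) = measure M (space M) - measure M E"
    using Esets by (intro finite_measure_Diff) (auto dest: sets.sets_into_space)
  moreover have "measure M (space M) = h" unfolding spM M_def
    using measM[of "{a..b}" a b] ab h by simp
  ultimately have mEM: "measure M E \<ge> h / 2" using mc by linarith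
  have Esub: "E \<subseteq> {a..b}" unfolding E_def spM by auto
  have mE: "measure lebesgue E \<ge> h / 2" using mEM measM[OF Esub] unfolding M_def by simp
  have Eleb: "E \<in> sets lebesgue" using Esets unfolding M_def
    by (subst (asm) sets_restrict_space_iff) auto
  define Q where "Q i = c i powr (p i / \<beta> i)" for i
  have Q0: "Q i \<ge> 0" for i unfolding Q_def by simp
  have EQ: "\<bar>f i x\<bar> powr p i \<le> Q i" if x: "x \<in> E" and i: "i < N" for x i
  proof -
    have "\<bar>f i x\<bar> powr p i = (\<bar>f i x\<bar> powr \<beta> i) powr (p i / \<beta> i)"
      using \<beta>[OF i] by (simp add: powr_powr)
    also have "\<dots> \<le> c i powr (p i / \<beta> i)"
      using x i p[OF i] \<beta>[OF i] unfolding E_def by (intro powr_mono2) auto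
    finally show ?thesis unfolding Q_def .
  qed
  define S where "S = {(\<Sum>i<N. (LINT s:{a..b}|lebesgue. \<bar>l' s\<bar> powr \<alpha> i * \<bar>f i s\<bar> powr p i)
                      powr (1 / p i)) | l l'. admissible_cutoff a b l l'}"
  define \<Phi> where "\<Phi> \<epsilon> = (\<Sum>i<N. ((h/2-\<epsilon>) powr (-\<alpha> i) * (Q i * h + B powr p i * \<epsilon>)) powr (1/p i))" for \<epsilon>
  have bdd: "bdd_below S" unfolding S_def
    by (rule bdd_belowI[of _ 0]) (auto intro!: sum_nonneg)
  have le: "Inf S \<le> \<Phi> \<epsilon>" if eps: "0 < \<epsilon>" "\<epsilon> < h/2" for \<epsilon>
  proof -
    obtain l l' where "admissible_cutoff a b l l'" and
      lb: "(\<Sum>i<N. (LINT s:{a..b}|lebesgue. \<bar>l' s\<bar> powr \<alpha> i * \<bar>f i s\<bar> powr p i) powr (1 / p i)) \<le> \<Phi> \<epsilon>"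
      using step[of N \<alpha> p a b h f B E Q \<epsilon>, OF \<alpha> p ab h fm[unfolded M_def] fB[unfolded M_def] B0 Eleb Esub mE EQ Q0 eps]
      unfolding \<Phi>_def by blast
    then have "(\<Sum>i<N. (LINT s:{a..b}|lebesgue. \<bar>l' s\<bar> powr \<alpha> i * \<bar>f i s\<bar> powr p i) powr (1 / p i)) \<in> S"
      unfolding S_def by blast
    from cInf_lower[OF this bdd] lb show ?thesis by linarith
  qed
  have lim: "(\<Phi> \<longlongrightarrow> \<Phi> 0) (at_right 0)"
    unfolding \<Phi>_def
  proof (intro tendsto_sum tendsto_powr')
    fix i assume i: "i \<in> {..<N}"
    show "((\<lambda>\<epsilon>. (h/2-\<epsilon>) powr (-\<alpha> i) * (Q i * h + B powr p i * \<epsilon>)) \<longlongrightarrow>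
           (h/2-0) powr (-\<alpha> i) * (Q i * h + B powr p i * 0)) (at_right 0)"
      using hpos by (intro tendsto_intros) auto
    show "((\<lambda>\<epsilon>. 1/p i) \<longlongrightarrow> 1/p i) (at_right 0)" by simp
    have "\<forall>\<^sub>F \<epsilon> in at_right 0. 0 \<le> (h/2-\<epsilon>) powr (-\<alpha> i) * (Q i * h + B powr p i * \<epsilon>)"
      unfolding eventually_at_right_field
      by (rule exI[of _ 1]) (use Q0[of i] hpos B0 in auto)
    then show "(h/2-0) powr (-\<alpha> i) * (Q i * h + B powr p i * 0) \<noteq> 0 \<or>
       (0 < 1/p i \<and> (\<forall>\<^sub>F \<epsilon> in at_right 0. 0 \<le> (h/2-\<epsilon>) powr (-\<alpha> i) * (Q i * h + B powr p i * \<epsilon>)))"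
      using p[of i] i by auto
  qed
  have "Inf S \<le> \<Phi> 0"
  proof (rule tendsto_le[OF _ lim tendsto_const])
    show "\<forall>\<^sub>F \<epsilon> in at_right 0. Inf S \<le> \<Phi> \<epsilon>"
      unfolding eventually_at_right_field
      by (rule exI[of _ "h/2"]) (use hpos le in auto)
  qed simp
  also have "\<Phi> 0 = (\<Sum>i<N. 2 powr (\<alpha> i / p i) * (2*N) powr (1/\<beta> i) * h powr (-(\<alpha> i-1)/p i - 1/\<beta> i)
             * n i powr (1/\<beta> i))"
    unfolding \<Phi>_def
  proof (rule sum.cong[OF refl])
    fix i assume i: "i \<in> {..<N}"
    show "((h/2-0) powr (-\<alpha> i) * (Q i * h + B powr p i * 0)) powr (1/p i) =
      2 powr (\<alpha> i / p i) * (2*N) powr (1/\<beta> i) * h powr (-(\<alpha> i-1)/p i - 1/\<beta> i) * n i powr (1/\<beta> i)"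
      using alg[of h "n i" "p i" "\<beta> i" N "\<alpha> i"] hpos n0[of i] p[of i] \<beta>[of i] i N
      unfolding Q_def c_def by simp
  qed
  finally show ?thesis unfolding S_def n_def .
qed



theorem lemma2p3:
  fixes N :: nat and \<alpha> \<beta> p :: "nat \<Rightarrow> real"
  assumes "\<And>i. i < N \<Longrightarrow> \<alpha> i \<ge> 1"
      and "\<And>i. i < N \<Longrightarrow> p i \<ge> 1"
      and "\<And>i. i < N \<Longrightarrow> \<beta> i > 0"
  shows "\<exists>C>0. \<forall>\<tau> \<delta> (f :: nat \<Rightarrow> real \<Rightarrow> real).
     \<tau> < \<delta> \<longrightarrow> \<delta> - \<tau> \<le> 1 \<longrightarrow> (\<forall>i<N. Linfty_on \<tau> \<delta> (f i)) \<longrightarrow>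
     Inf {(\<Sum>i<N. (LINT s:{\<tau>..\<delta>}|lebesgue. \<bar>l' s\<bar> powr \<alpha> i * \<bar>f i s\<bar> powr p i)
                      powr (1 / p i)) | l l'. admissible_cutoff \<tau> \<delta> l l'}
     \<le> C * (\<delta> - \<tau>) powr (- (MAX i\<in>{..<N}. (\<alpha> i - 1) / p i) - 1 / (MIN i\<in>{..<N}. \<beta> i))
         * (\<Sum>i<N. (LINT s:{\<tau>..\<delta>}|lebesgue. \<bar>f i s\<bar> powr \<beta> i) powr (1 / \<beta> i))"
proof (cases "N = 0")
  case True
  show ?thesis
  proof (rule exI[of _ 1], intro conjI allI impI)
    fix \<tau> \<delta> :: real and f :: "nat \<Rightarrow> real \<Rightarrow> real"
    assume td: "\<tau> < \<delta>"
    let ?l = "\<lambda>s. (\<delta> - s) / (\<delta> - \<tau>)"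
    let ?l' = "\<lambda>s::real. - 1 / (\<delta> - \<tau>)"
    have adm: "admissible_cutoff \<tau> \<delta> ?l ?l'"
      unfolding admissible_cutoff_def
    proof (intro conjI ballI)
      fix s assume "s \<in> {\<tau>..\<delta>}"
      have "((\<lambda>s. (\<delta> - s) / (\<delta> - \<tau>)) has_real_derivative (0 - 1) / (\<delta> - \<tau>)) (at s within {\<tau>..\<delta>})"
        by (intro DERIV_cdivide DERIV_diff DERIV_const DERIV_ident)
      then show "(?l has_real_derivative ?l' s) (at s within {\<tau>..\<delta>})" by simp
      show "?l' s \<le> 0" using td by simp
    qed (use td in auto)
    let ?S = "{(\<Sum>i<N. (LINT s:{\<tau>..\<delta>}|lebesgue. \<bar>l' s\<bar> powr \<alpha> i * \<bar>f i s\<bar> powr p i)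
                      powr (1 / p i)) | l l'. admissible_cutoff \<tau> \<delta> l l'}"
    have S0: "?S = {0}" unfolding True using adm by auto
    show "Inf ?S \<le> 1 * (\<delta> - \<tau>) powr (- (MAX i\<in>{..<N}. (\<alpha> i - 1) / p i) - 1 / (MIN i\<in>{..<N}. \<beta> i))
         * (\<Sum>i<N. (LINT s:{\<tau>..\<delta>}|lebesgue. \<bar>f i s\<bar> powr \<beta> i) powr (1 / \<beta> i))"
      unfolding S0 using True by simp
  qed simp
next
  case False
  then have N: "N > 0" by simp
  define K where "K i = 2 powr (\<alpha> i / p i) * (2*N) powr (1/\<beta> i)" for i
  define C where "C = 1 + (\<Sum>i<N. K i)"
  define \<gamma> where "\<gamma> = (MAX i\<in>{..<N}. (\<alpha> i - 1) / p i) + 1 / (MIN i\<in>{..<N}. \<beta> i)"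
  have K0: "K i \<ge> 0" for i unfolding K_def by simp
  have KC: "K i \<le> C" if "i < N" for i
    unfolding C_def using member_le_sum[of i "{..<N}" K] K0 that by auto
  have Cpos: "C > 0" unfolding C_def using K0 by (simp add: add_pos_nonneg sum_nonneg)
  have Minpos: "(MIN i\<in>{..<N}. \<beta> i) > 0"
    using N assms(3) by (subst Min_gr_iff) auto
  have expo: "-\<gamma> \<le> -(\<alpha> i-1)/p i - 1/\<beta> i" if i: "i < N" for i
  proof -
    have "(\<alpha> i - 1) / p i \<le> (MAX i\<in>{..<N}. (\<alpha> i - 1) / p i)"
      using i by (intro Max_ge) auto
    moreover have "(MIN i\<in>{..<N}. \<beta> i) \<le> \<beta> i"
      using i by (intro Min_le) auto
    then have "1 / \<beta> i \<le> 1 / (MIN i\<in>{..<N}. \<beta> i)"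
      using Minpos by (intro divide_left_mono) auto
    ultimately show ?thesis unfolding \<gamma>_def minus_divide_left[symmetric] by linarith
  qed
  show ?thesis
  proof (rule exI[of _ C], intro conjI allI impI)
    show "C > 0" by (rule Cpos)
    fix \<tau> \<delta> :: real and f :: "nat \<Rightarrow> real \<Rightarrow> real"
    assume td: "\<tau> < \<delta>" and h1: "\<delta> - \<tau> \<le> 1" and fL: "\<forall>i<N. Linfty_on \<tau> \<delta> (f i)"
    let ?h = "\<delta> - \<tau>"
    let ?m = "\<lambda>i. (LINT s:{\<tau>..\<delta>}|lebesgue. \<bar>f i s\<bar> powr \<beta> i) powr (1 / \<beta> i)"
    have "Inf {(\<Sum>i<N. (LINT s:{\<tau>..\<delta>}|lebesgue. \<bar>l' s\<bar> powr \<alpha> i * \<bar>f i s\<bar> powr p i)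
                      powr (1 / p i)) | l l'. admissible_cutoff \<tau> \<delta> l l'}
      \<le> (\<Sum>i<N. K i * ?h powr (-(\<alpha> i-1)/p i - 1/\<beta> i) * ?m i)"
      unfolding K_def
      by (rule core[OF N assms(1,2,3) td refl]) (use fL in auto)
    also have "\<dots> \<le> (\<Sum>i<N. C * ?h powr (-\<gamma>) * ?m i)"
    proof (rule sum_mono)
      fix i assume "i \<in> {..<N}"
      then have i: "i < N" by simp
      have "?h powr (-(\<alpha> i-1)/p i - 1/\<beta> i) \<le> ?h powr (-\<gamma>)"
        using expo[OF i] td h1 by (intro powr_mono') auto
      then have "K i * ?h powr (-(\<alpha> i-1)/p i - 1/\<beta> i) \<le> C * ?h powr (-\<gamma>)"
        using KC[OF i] K0[of i] by (intro mult_mono) auto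
      then show "K i * ?h powr (-(\<alpha> i-1)/p i - 1/\<beta> i) * ?m i \<le> C * ?h powr (-\<gamma>) * ?m i"
        by (intro mult_right_mono) auto
    qed
    also have "\<dots> = C * ?h powr (-\<gamma>) * (\<Sum>i<N. ?m i)"
      by (simp add: sum_distrib_left)
    finally have X: "Inf {(\<Sum>i<N. (LINT s:{\<tau>..\<delta>}|lebesgue. \<bar>l' s\<bar> powr \<alpha> i * \<bar>f i s\<bar> powr p i)
                      powr (1 / p i)) | l l'. admissible_cutoff \<tau> \<delta> l l'}
      \<le> C * ?h powr (-\<gamma>) * (\<Sum>i<N. ?m i)" .
    have eqg: "-\<gamma> = - (MAX i\<in>{..<N}. (\<alpha> i - 1) / p i) - 1 / (MIN i\<in>{..<N}. \<beta> i)"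
      unfolding \<gamma>_def by simp
    show "Inf {(\<Sum>i<N. (LINT s:{\<tau>..\<delta>}|lebesgue. \<bar>l' s\<bar> powr \<alpha> i * \<bar>f i s\<bar> powr p i)
                      powr (1 / p i)) | l l'. admissible_cutoff \<tau> \<delta> l l'}
     \<le> C * (\<delta> - \<tau>) powr (- (MAX i\<in>{..<N}. (\<alpha> i - 1) / p i) - 1 / (MIN i\<in>{..<N}. \<beta> i))
         * (\<Sum>i<N. (LINT s:{\<tau>..\<delta>}|lebesgue. \<bar>f i s\<bar> powr \<beta> i) powr (1 / \<beta> i))"
      by (fact X[unfolded eqg])
  qed
qed

end
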